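(* Let $A$ be a finite alphabet with at least two letters. No cellular automaton $F$ on $A^{\mathbb N}$ is expansive with respect to the Feldman pseudo-metric; that is, for every $\varepsilon>0$ there exist $x,y\in A^{\mathbb N}$ with $\mathfrak d_L(x,y)>0$ such that $\mathfrak d_L(F^t(x),F^t(y))\le\varepsilon$ for all $t\in\mathbb N$.
   Context: A cellular automaton with diameter $\delta\ge1$ is $F:A^{\mathbb N}\to A^{\mathbb N}$ with $F(x)_i=f(x_{[i,i+\delta)})$ for a local rule $f:A^\delta\to A$, where $x_{[i,j)}=x_i\cdots x_{j-1}$. The Levenshtein distance is $d_L(u,v)=\frac{|u|+|v|}{2}-\ell$, $\ell$ the length of a longest common subsequence of $u,v$; the Feldman pseudo-metric is $\mathfrak d_L(x,y)=\limsup_{l\to\infty}d_L(x_{[0,l)},y_{[0,l)})/l$. $F$ is expansive if $\exists\varepsilon>0$ such that for all $x,y$ with $\mathfrak d_L(x,y)>0$ there is $t\in\mathbb N$ with $\mathfrak d_L(F^t(x),F^t(y))>\varepsilon$. *)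

theory Defs
  imports "HOL-Analysis.Analysis" "HOL-Library.Sublist" "HOL-Library.Liminf_Limsup"
begin

definition factor :: "(nat \<Rightarrow> 'a) \<Rightarrow> nat \<Rightarrow> nat \<Rightarrow> 'a list" where
  "factor x i j = map x [i..<j]"

definition lcs_len :: "'a list \<Rightarrow> 'a list \<Rightarrow> nat" where
  "lcs_len u v = Max {length w | w. subseq w u \<and> subseq w v}"

text \<open>Levenshtein distance (insertions/deletions), as in the paper.\<close>
definition lev_dist :: "'a list \<Rightarrow> 'a list \<Rightarrow> real" where
  "lev_dist u v = (real (length u) + real (length v)) / 2 - real (lcs_len u v)"

definition feldman :: "(nat \<Rightarrow> 'a) \<Rightarrow> (nat \<Rightarrow> 'a) \<Rightarrow> ereal" where
  "feldman x y = limsup (\<lambda>l. ereal (lev_dist (factor x 0 l) (factor y 0 l) / real l))"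

definition is_CA :: "((nat \<Rightarrow> 'a) \<Rightarrow> (nat \<Rightarrow> 'a)) \<Rightarrow> bool" where
  "is_CA F \<longleftrightarrow> (\<exists>\<delta>::nat. \<delta> \<ge> 1 \<and> (\<exists>f :: 'a list \<Rightarrow> 'a.
      \<forall>x i. F x i = f (factor x i (i + \<delta>))))"

definition feldman_expansive :: "((nat \<Rightarrow> 'a) \<Rightarrow> (nat \<Rightarrow> 'a)) \<Rightarrow> bool" where
  "feldman_expansive F \<longleftrightarrow> (\<exists>\<epsilon>::real. \<epsilon> > 0 \<and> (\<forall>x y. feldman x y > 0 \<longrightarrow>
      (\<exists>t::nat. feldman ((F ^^ t) x) ((F ^^ t) y) > ereal \<epsilon>)))"

end

theory Submission
  imports Defs
begin

lemma lcs_finite: "finite {length w | w. subseq w u \<and> subseq w v}"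
proof -
  have "{length w | w. subseq w u \<and> subseq w v} \<subseteq> {..length u}"
    using list_emb_length by fastforce
  thus ?thesis using finite_subset by blast
qed

lemma lcs_len_ge: "subseq w u \<Longrightarrow> subseq w v \<Longrightarrow> length w \<le> lcs_len u v"
  unfolding lcs_len_def using lcs_finite by (intro Max_ge) auto

lemma lcs_len_le: "(\<And>w. subseq w u \<Longrightarrow> subseq w v \<Longrightarrow> length w \<le> n) \<Longrightarrow> lcs_len u v \<le> n"
  unfolding lcs_len_def using lcs_finite
  by (subst Max_le_iff) auto

lemma lev_le_mism:
  assumes "length u = length v"
  shows "lev_dist u v \<le> card {i. i < length u \<and> u!i \<noteq> v!i}"
proof -
  define P where "P = (\<lambda>(p::'a, q). p = q)"
  define zs where "zs = filter P (zip u v)"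
  have "subseq (map fst zs) (map fst (zip u v))" unfolding zs_def by (intro subseq_map) simp
  hence s1: "subseq (map fst zs) u" using assms by simp
  have "subseq (map snd zs) (map snd (zip u v))" unfolding zs_def by (intro subseq_map) simp
  hence "subseq (map snd zs) v" using assms by simp
  moreover have "map snd zs = map fst zs" unfolding zs_def P_def by (induct "zip u v") auto
  ultimately have s2: "subseq (map fst zs) v" by simp
  have "length zs \<le> lcs_len u v" using lcs_len_ge[OF s1 s2] by simp
  moreover have "length zs + length (filter (\<lambda>x. \<not> P x) (zip u v)) = length u"
    unfolding zs_def using sum_length_filter_compl[of P "zip u v"] assms by simp
  moreover have "length (filter (\<lambda>x. \<not> P x) (zip u v)) = card {i. i < length u \<and> u!i \<noteq> v!i}"
    unfolding length_filter_conv_card P_def using assms by (auto intro!: arg_cong[where f=card])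
  ultimately show ?thesis unfolding lev_dist_def using assms by simp
qed

lemma lev_rep_ge:
  assumes "length v = l"
  shows "lev_dist (replicate l a) v \<ge> card {i. i < l \<and> v!i \<noteq> a}"
proof -
  have "lcs_len (replicate l a) v \<le> length (filter (\<lambda>c. c = a) v)"
  proof (rule lcs_len_le)
    fix w assume w1: "subseq w (replicate l a)" and w2: "subseq w v"
    have "set w \<subseteq> {a}" using list_emb_set[OF w1] by (auto dest: list_emb_set)
    hence "filter (\<lambda>c. c = a) w = w" by (auto intro: filter_True)
    moreover have "subseq (filter (\<lambda>c. c = a) w) (filter (\<lambda>c. c = a) v)" using w2 by simp
    ultimately show "length w \<le> length (filter (\<lambda>c. c = a) v)" using list_emb_length by metis
  qed
  moreover have "length (filter (\<lambda>c. c = a) v) + length (filter (\<lambda>c. \<not> c = a) v) = l"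
    using sum_length_filter_compl assms by metis
  moreover have "length (filter (\<lambda>c. \<not> c = a) v) = card {i. i < l \<and> v!i \<noteq> a}"
    unfolding length_filter_conv_card using assms by simp
  ultimately have "real (lcs_len (replicate l a) v) + real (card {i. i < l \<and> v!i \<noteq> a}) \<le> real l"
    by (metis add_le_cancel_right of_nat_add of_nat_le_iff)
  thus ?thesis unfolding lev_dist_def using assms by simp
qed

lemma CA_local:
  fixes F :: "(nat \<Rightarrow> 'a) \<Rightarrow> (nat \<Rightarrow> 'a)"
  assumes "\<delta> \<ge> 1" and Ff: "\<And>x i. F x i = f (factor x i (i + \<delta>))"
  shows "(\<forall>j. i \<le> j \<and> j \<le> i + t*\<delta> \<longrightarrow> z j = z' j) \<Longrightarrow> (F^^t) z i = (F^^t) z' i"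
proof (induction t arbitrary: i)
  case 0
  have "z i = z' i" using 0 by auto
  then show ?case by simp
next
  case (Suc t)
  have "factor ((F^^t) z) i (i + \<delta>) = factor ((F^^t) z') i (i + \<delta>)"
    unfolding factor_def
  proof (rule map_cong[OF refl])
    fix j assume "j \<in> set [i..<i+\<delta>]"
    hence j: "i \<le> j" "j < i + \<delta>" by auto
    show "(F^^t) z j = (F^^t) z' j"
    proof (rule Suc.IH, intro allI impI)
      fix k assume "j \<le> k \<and> k \<le> j + t*\<delta>"
      thus "z k = z' k" using Suc.prems j by auto
    qed
  qed
  hence eq: "f (factor ((F^^t) z) i (i + \<delta>)) = f (factor ((F^^t) z') i (i + \<delta>))" by simp
  have "(F^^Suc t) z i = F ((F^^t) z) i" by simp
  also have "\<dots> = f (factor ((F^^t) z) i (i+\<delta>))" by (rule Ff)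
  also have "\<dots> = f (factor ((F^^t) z') i (i+\<delta>))" by (rule eq)
  also have "\<dots> = F ((F^^t) z') i" by (rule Ff[symmetric])
  also have "\<dots> = (F^^Suc t) z' i" by simp
  finally show ?case .
qed

lemma sum_pow2: "(\<Sum>k\<le>K. (2::nat)^k) < 2 * 2^K"
  by (induction K) auto

definition Wset :: "nat \<Rightarrow> nat set" where
  "Wset R = {i. \<exists>k. R*2^k \<le> i \<and> i < R*2^k + 2^k}"

lemma count_bound:
  assumes R: "R \<ge> 2"
  shows "(R - 1) * card {i. i < l \<and> (\<exists>s\<le>T. i + s \<in> Wset R)} \<le> (R - 1) * ((R+1)*T) + 4*l"
proof -
  define S where "S = {k. (R-1)*2^k < l}"
  define B where "B = (\<lambda>k::nat. {R*2^k - 2^k ..< R*2^k + 2^k})"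
  have sub: "{i. i < l \<and> (\<exists>s\<le>T. i + s \<in> Wset R)} \<subseteq> {..<(R+1)*T} \<union> (\<Union>k\<in>S. B k)"
  proof
    fix i assume "i \<in> {i. i < l \<and> (\<exists>s\<le>T. i + s \<in> Wset R)}"
    then obtain s k where i: "i < l" "s \<le> T" "R*2^k \<le> i + s" "i + s < R*2^k + 2^k"
      unfolding Wset_def by auto
    show "i \<in> {..<(R+1)*T} \<union> (\<Union>k\<in>S. B k)"
    proof (cases "2^k \<le> T")
      case True
      have "R*2^k \<le> R*T" using True by simp
      then have "i + s < R*T + T" using i True by linarith
      hence "i < (R+1)*T" using i True by (simp add: algebra_simps)
      thus ?thesis by simp
    next
      case False
      have "(R-1)*2^k = R*2^k - 2^k" by (simp add: algebra_simps)
      moreover have "R*2^k - 2^k \<le> i" using i False by linarith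
      ultimately have "k \<in> S" unfolding S_def using i by simp
      moreover have "i \<in> B k" unfolding B_def using i False by auto
      ultimately show ?thesis by blast
    qed
  qed
  have finS: "finite S"
  proof -
    have "S \<subseteq> {..<l}"
    proof
      fix k assume "k \<in> S"
      hence "(R-1)*2^k < l" by (simp add: S_def)
      moreover have "k < 2^k" by (rule less_exp)
      moreover have "2^k \<le> (R-1)*2^k" using R by simp
      ultimately show "k \<in> {..<l}" by (simp only: lessThan_iff)
    qed
    thus ?thesis using finite_subset by blast
  qed
  have cardB: "card (B k) = 2 * 2^k" for k
  proof -
    have "2^k \<le> R*2^k" using R by simp
    thus ?thesis unfolding B_def by simp
  qed
  have sumS: "(R-1) * (\<Sum>k\<in>S. 2 * 2^k) \<le> 4*l"
  proof (cases "S = {}")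
    case True then show ?thesis by simp
  next
    case False
    define K where "K = Max S"
    have KS: "K \<in> S" using Max_in[OF finS False] K_def by simp
    have "S \<subseteq> {..K}" using Max_ge[OF finS] K_def by auto
    hence "(\<Sum>k\<in>S. (2::nat)^k) \<le> (\<Sum>k\<le>K. 2^k)" by (intro sum_mono2) auto
    also have "\<dots> < 2 * 2^K" by (rule sum_pow2)
    finally have "(\<Sum>k\<in>S. (2::nat)^k) < 2*2^K" .
    hence "(R-1) * (\<Sum>k\<in>S. (2::nat)^k) \<le> (R-1) * (2*2^K)" by simp
    moreover have "(R-1)*2^K < l" using KS by (simp add: S_def)
    ultimately have "(R-1) * (\<Sum>k\<in>S. (2::nat)^k) \<le> 2*l" by linarith
    moreover have "(\<Sum>k\<in>S. (2::nat) * 2^k) = 2 * (\<Sum>k\<in>S. 2^k)" by (simp add: sum_distrib_left)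
    moreover have "(R-1) * (2 * (\<Sum>k\<in>S. (2::nat)^k)) = 2 * ((R-1) * (\<Sum>k\<in>S. 2^k))" by simp
    ultimately have "(R-1) * (\<Sum>k\<in>S. (2::nat) * 2^k) = 2 * ((R-1) * (\<Sum>k\<in>S. 2^k))"
      and "(R-1) * (\<Sum>k\<in>S. (2::nat)^k) \<le> 2*l" by simp_all
    thus ?thesis by linarith
  qed
  have c1: "card {i. i < l \<and> (\<exists>s\<le>T. i + s \<in> Wset R)} \<le> card ({..<(R+1)*T} \<union> (\<Union>k\<in>S. B k))"
  proof (rule card_mono[OF _ sub])
    have "finite (\<Union>k\<in>S. B k)" using finS unfolding B_def by blast
    thus "finite ({..<(R+1)*T} \<union> (\<Union>k\<in>S. B k))" by blast
  qed
  have c2: "card ({..<(R+1)*T} \<union> (\<Union>k\<in>S. B k)) \<le> card {..<(R+1)*T} + card (\<Union>k\<in>S. B k)" by (rule card_Un_le)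
  have c3: "card (\<Union>k\<in>S. B k) \<le> (\<Sum>k\<in>S. card (B k))" by (rule card_UN_le[OF finS])
  have c4: "(\<Sum>k\<in>S. card (B k)) = (\<Sum>k\<in>S. 2*2^k)" using cardB by simp
  have "card {i. i < l \<and> (\<exists>s\<le>T. i + s \<in> Wset R)} \<le> (R+1)*T + (\<Sum>k\<in>S. 2*2^k)"
    using c1 c2 c3 c4 by simp
  hence "(R - 1) * card {i. i < l \<and> (\<exists>s\<le>T. i + s \<in> Wset R)} \<le> (R-1)*((R+1)*T) + (R-1)*(\<Sum>k\<in>S. 2*2^k)"
    unfolding add_mult_distrib2[symmetric] by (rule mult_le_mono2)
  thus ?thesis using sumS by linarith
qed

theorem mainTheorem16:
  fixes F :: "(nat \<Rightarrow> 'a::finite) \<Rightarrow> (nat \<Rightarrow> 'a)"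
  assumes "CARD('a) \<ge> 2"
    and "is_CA F"
  shows "\<not> feldman_expansive F"
proof
  assume "feldman_expansive F"
  then obtain \<epsilon> :: real where \<epsilon>: "\<epsilon> > 0" and
    H: "\<And>x y. feldman x y > 0 \<Longrightarrow> (\<exists>t::nat. feldman ((F ^^ t) x) ((F ^^ t) y) > ereal \<epsilon>)"
    unfolding feldman_expansive_def by blast
  obtain \<delta> :: nat and f where \<delta>: "\<delta> \<ge> 1" and Ff: "\<And>x i. F x i = f (factor x i (i + \<delta>))"
    using assms(2) unfolding is_CA_def by blast
  have "\<exists>a b::'a. a \<noteq> b"
  proof (rule ccontr)
    assume "\<not> (\<exists>a b::'a. a \<noteq> b)"
    hence U: "(UNIV::'a set) = {undefined}" by auto
    have "CARD('a) = 1" unfolding U by simp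
    thus False using assms(1) by simp
  qed
  then obtain a b :: 'a where ab: "a \<noteq> b" by blast
  define R where "R = nat \<lceil>8/\<epsilon>\<rceil> + 2"
  have R2: "R \<ge> 2" unfolding R_def by simp
  have Reps: "real (R - 1) * \<epsilon> > 8"
  proof -
    have "real (R - 1) = real (nat \<lceil>8/\<epsilon>\<rceil>) + 1" unfolding R_def by simp
    also have "\<dots> > 8/\<epsilon>" by linarith
    finally have "8/\<epsilon> < real (R - 1)" .
    thus ?thesis using \<epsilon> by (simp only: divide_less_eq)
  qed
  define x where "x = (\<lambda>_::nat. a)"
  define y where "y = (\<lambda>i. if i \<in> Wset R then b else a)"
  have fx: "factor x 0 l = replicate l a" for l
    unfolding factor_def x_def by (simp add: map_replicate_const)
  have pos: "feldman x y > 0"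
  proof -
    define g where "g = (\<lambda>l. ereal (lev_dist (factor x 0 l) (factor y 0 l) / real l))"
    define s where "s = (\<lambda>k::nat. (R+1)*2^k)"
    have sm: "strict_mono s" unfolding s_def by (intro strict_monoI mult_strict_left_mono power_strict_increasing) auto
    have gs: "ereal (1 / real (R+1)) \<le> (g \<circ> s) k" for k
    proof -
      define l where "l = s k"
      have lv: "length (factor y 0 l) = l" by (simp add: factor_def)
      have "{R*2^k..<R*2^k+2^k} \<subseteq> {i. i < l \<and> factor y 0 l ! i \<noteq> a}"
      proof
        fix i assume "i \<in> {R*2^k..<R*2^k+2^k}"
        hence i: "R*2^k \<le> i" "i < R*2^k+2^k" by auto
        have iW: "i \<in> Wset R" unfolding Wset_def using i by blast
        have il: "i < l" unfolding l_def s_def using i by (simp add: algebra_simps)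
        have "factor y 0 l ! i = b" using iW il by (simp add: factor_def y_def)
        thus "i \<in> {i. i < l \<and> factor y 0 l ! i \<noteq> a}" using il ab by simp
      qed
      hence "card {R*2^k..<R*2^k+2^k} \<le> card {i. i < l \<and> factor y 0 l ! i \<noteq> a}"
        by (intro card_mono) simp_all
      hence "2^k \<le> card {i. i < l \<and> factor y 0 l ! i \<noteq> a}" by simp
      hence "real (2^k) \<le> real (card {i. i < l \<and> factor y 0 l ! i \<noteq> a})" by (simp only: of_nat_le_iff)
      moreover have "real (card {i. i < l \<and> factor y 0 l ! i \<noteq> a}) \<le> lev_dist (factor x 0 l) (factor y 0 l)"
        using lev_rep_ge[OF lv, of a] by (simp only: fx)
      ultimately have "real (2^k) \<le> lev_dist (factor x 0 l) (factor y 0 l)" by (rule order_trans)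
      hence "real (2^k) / real l \<le> lev_dist (factor x 0 l) (factor y 0 l) / real l"
        by (simp add: divide_right_mono)
      moreover have "real (2^k) / real l = 1 / real (R+1)"
        unfolding l_def s_def using add_pos_nonneg[of "(2::real)^k" "real R * 2^k"] by (simp add: field_simps)
      ultimately show ?thesis unfolding g_def l_def by simp
    qed
    have "ereal (1 / real (R+1)) \<le> limsup (g \<circ> s)"
      using gs by (intro le_Limsup) auto
    also have "\<dots> \<le> limsup g" by (rule limsup_subseq_mono[OF sm])
    finally have "ereal (1 / real (R+1)) \<le> feldman x y" unfolding feldman_def g_def .
    moreover have "ereal 0 < ereal (1 / real (R+1))" by simp
    ultimately show ?thesis using zero_ereal_def by (metis order_less_le_trans)
  qed
  have bnd: "feldman ((F^^t) x) ((F^^t) y) \<le> ereal \<epsilon>" for t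
  proof -
    define T where "T = t * \<delta>"
    define L0 where "L0 = nat \<lceil>2 * real ((R+1)*T) / \<epsilon>\<rceil> + 1"
    have ev: "ereal (lev_dist (factor ((F^^t) x) 0 l) (factor ((F^^t) y) 0 l) / real l) \<le> ereal \<epsilon>"
      if l: "l \<ge> L0" for l
    proof -
      define c where "c = card {i. i < l \<and> (\<exists>s\<le>T. i + s \<in> Wset R)}"
      have lpos: "l > 0" using l unfolding L0_def by simp
      have d1: "lev_dist (factor ((F^^t) x) 0 l) (factor ((F^^t) y) 0 l)
          \<le> card {i. i < l \<and> (F^^t) x i \<noteq> (F^^t) y i}"
      proof -
        have lu: "length (factor ((F^^t) x) 0 l) = l" "length (factor ((F^^t) y) 0 l) = l"
          by (simp_all add: factor_def)
        have eqset: "{i. i < l \<and> factor ((F^^t) x) 0 l ! i \<noteq> factor ((F^^t) y) 0 l ! i}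
            = {i. i < l \<and> (F^^t) x i \<noteq> (F^^t) y i}" by (auto simp: factor_def)
        show ?thesis using lev_le_mism[of "factor ((F^^t) x) 0 l" "factor ((F^^t) y) 0 l"]
          unfolding lu eqset by simp
      qed
      have "{i. i < l \<and> (F^^t) x i \<noteq> (F^^t) y i} \<subseteq> {i. i < l \<and> (\<exists>s\<le>T. i + s \<in> Wset R)}"
      proof safe
        fix i assume il: "i < l" and ne: "(F^^t) x i \<noteq> (F^^t) y i"
        show "\<exists>s\<le>T. i + s \<in> Wset R"
        proof (rule ccontr)
          assume "\<not> (\<exists>s\<le>T. i + s \<in> Wset R)"
          hence nW: "\<And>s. s \<le> T \<Longrightarrow> i + s \<notin> Wset R" by blast
          have "\<forall>j. i \<le> j \<and> j \<le> i + t*\<delta> \<longrightarrow> x j = y j"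
          proof (intro allI impI)
            fix j assume j: "i \<le> j \<and> j \<le> i + t*\<delta>"
            hence "j - i \<le> T" and "i + (j - i) = j" unfolding T_def by auto
            hence "j \<notin> Wset R" using nW by metis
            thus "x j = y j" unfolding x_def y_def by simp
          qed
          hence "(F^^t) x i = (F^^t) y i" by (rule CA_local[where F=F and f=f, OF \<delta> Ff])
          thus False using ne by simp
        qed
      qed
      hence "card {i. i < l \<and> (F^^t) x i \<noteq> (F^^t) y i} \<le> c"
        unfolding c_def by (intro card_mono) auto
      hence "real (card {i. i < l \<and> (F^^t) x i \<noteq> (F^^t) y i}) \<le> real c" by (simp only: of_nat_le_iff)
      hence d2: "lev_dist (factor ((F^^t) x) 0 l) (factor ((F^^t) y) 0 l) \<le> c"
        using d1 by linarith
      have "(R - 1) * c \<le> (R - 1) * ((R+1)*T) + 4*l" unfolding c_def by (rule count_bound[OF R2])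
      hence "real ((R - 1) * c) \<le> real ((R - 1) * ((R+1)*T) + 4*l)" by (simp only: of_nat_le_iff)
      hence c1: "real (R-1) * c \<le> real (R-1) * real ((R+1)*T) + 4 * real l"
        by (simp only: of_nat_add of_nat_mult of_nat_numeral)
      have "2 * real ((R+1)*T) / \<epsilon> \<le> real l" using l unfolding L0_def by linarith
      hence c2: "real ((R+1)*T) \<le> \<epsilon> * real l / 2" using \<epsilon> by (simp add: field_simps)
      have c3: "8 * real l \<le> real (R-1) * \<epsilon> * real l" by (rule mult_right_mono[OF less_imp_le[OF Reps]]) simp
      have Rp: "real (R-1) > 0" using R2 by simp
      have "real (R-1) * c \<le> real (R-1) * (\<epsilon> * real l)"
      proof -
        have "real (R-1) * real ((R+1)*T) \<le> real (R-1) * (\<epsilon> * real l / 2)"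
          using c2 Rp by (intro mult_left_mono) auto
        thus ?thesis using c1 c3 by (simp add: algebra_simps)
      qed
      hence "real c \<le> \<epsilon> * real l" using Rp by simp
      hence "lev_dist (factor ((F^^t) x) 0 l) (factor ((F^^t) y) 0 l) \<le> \<epsilon> * real l" using d2 by linarith
      thus ?thesis using lpos by (simp add: divide_le_eq mult.commute)
    qed
    show ?thesis unfolding feldman_def
      by (rule Limsup_bounded) (use ev in \<open>auto simp: eventually_sequentially\<close>)
  qed
  from H[OF pos] obtain t where "feldman ((F^^t) x) ((F^^t) y) > ereal \<epsilon>" by blast
  with bnd[of t] show False by simp
qed

end
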